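(* Let $(X,\mu,T)$ be a probability-preserving system and $\mathcal{P}$ a finite Borel partition of $X$. Then there is a function $g:\mathbb{N}\cup\{0\}\to[0,\infty)$ with $g(m)=o(m)$ as $m\to\infty$ such that for all bounded (possibly empty) discrete intervals $I,J\subseteq\mathbb{Z}$ for which $I\cup J$ is a discrete interval, \[\mathrm{I}_\mu(\mathcal{P}^J;\mathcal{P}^I\,|\,\mathcal{P}^{I\cap J})\le g(|J\setminus I|).\]
   Context: $\mathcal{P}^F=\bigvee_{n\in F}T^{-n}\mathcal{P}$ for finite $F\subseteq\mathbb{Z}$ (the trivial partition if $F=\emptyset$). $\mathrm{I}_\mu(\cdot;\cdot\,|\,\cdot)$ is conditional mutual information: $\mathrm{I}_\mu(\mathcal{A};\mathcal{B}\,|\,\mathcal{C})=\mathrm{H}_\mu(\mathcal{A}\,|\,\mathcal{C})-\mathrm{H}_\mu(\mathcal{A}\,|\,\mathcal{B}\vee\mathcal{C})$. *)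

theory Defs
  imports "HOL-Probability.Probability" "HOL-Library.Landau_Symbols"
begin

definition pp_system :: "'a measure \<Rightarrow> ('a \<Rightarrow> 'a) \<Rightarrow> bool" where
  "pp_system M T \<longleftrightarrow> prob_space M \<and> T \<in> M \<rightarrow>\<^sub>M M \<and>
     bij_betw T (space M) (space M) \<and> inv_into (space M) T \<in> M \<rightarrow>\<^sub>M M \<and>
     (\<forall>A\<in>sets M. measure M (T -` A \<inter> space M) = measure M A)"

definition fin_partition :: "'a measure \<Rightarrow> 'a set set \<Rightarrow> bool" where
  "fin_partition M P \<longleftrightarrow> finite P \<and> P \<subseteq> sets M \<and> \<Union>P = space M \<and>
     (\<forall>A\<in>P. \<forall>B\<in>P. A \<noteq> B \<longrightarrow> A \<inter> B = {})"

definition Tpow :: "'a measure \<Rightarrow> ('a \<Rightarrow> 'a) \<Rightarrow> int \<Rightarrow> 'a \<Rightarrow> 'a" where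
  "Tpow M T n = (if 0 \<le> n then T ^^ nat n else (inv_into (space M) T) ^^ nat (- n))"

text \<open>P^F = join over n in F of T^{-n} P (nonempty cells); trivial partition if F is empty.\<close>
definition refine :: "'a measure \<Rightarrow> ('a \<Rightarrow> 'a) \<Rightarrow> 'a set set \<Rightarrow> int set \<Rightarrow> 'a set set" where
  "refine M T P F = {C. \<exists>w. (\<forall>n\<in>F. w n \<in> P) \<and>
       C = space M \<inter> (\<Inter>n\<in>F. Tpow M T n -` w n)} - {{}}"

definition join :: "'a set set \<Rightarrow> 'a set set \<Rightarrow> 'a set set" where
  "join A B = {a \<inter> b | a b. a \<in> A \<and> b \<in> B} - {{}}"

text \<open>Conditional entropy H_mu(A | C) (natural log; 0 log 0 = 0).\<close>
definition cond_entropy :: "'a measure \<Rightarrow> 'a set set \<Rightarrow> 'a set set \<Rightarrow> real" where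
  "cond_entropy M A C = - (\<Sum>a\<in>A. \<Sum>c\<in>C.
      measure M (a \<inter> c) * ln (measure M (a \<inter> c) / measure M c))"

definition cond_mutual_info :: "'a measure \<Rightarrow> 'a set set \<Rightarrow> 'a set set \<Rightarrow> 'a set set \<Rightarrow> real" where
  "cond_mutual_info M A B C = cond_entropy M A C - cond_entropy M A (join B C)"

definition dinterval :: "int set \<Rightarrow> bool" where
  "dinterval I \<longleftrightarrow> (\<exists>a b. I = {a..b})"

end

theory Submission
  imports Defs
begin


lemma logsum_pt:
  fixes x y X Y :: real
  assumes "0 \<le> x" "x \<le> y" "0 < X" "0 < Y"
  shows "x * ln (X / Y) + x - y * X / Y \<le> x * ln (x / y)"
proof (cases "x = 0")
  case True then show ?thesis using assms by simp
next
  case False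
  then have x: "0 < x" using assms by simp
  then have y: "0 < y" using assms by simp
  define z where "z = (x * Y) / (y * X)"
  have z: "0 < z" using x y assms by (simp add: z_def)
  have "ln (1/z) \<le> 1/z - 1" using z by (intro ln_le_minus_one) simp
  then have lz: "1 - 1/z \<le> ln z" using z by (simp add: ln_div)
  have "ln z = ln (x/y) - ln (X/Y)" unfolding z_def using x y assms
    by (simp add: ln_div ln_mult)
  then have "x * (1 - 1/z) \<le> x * (ln (x/y) - ln (X/Y))" using lz x
    by (intro mult_left_mono) auto
  moreover have "x * (1 - 1/z) = x - y * X / Y" unfolding z_def using x y assms
    by (simp add: field_simps)
  ultimately show ?thesis by (simp add: algebra_simps)
qed

lemma logsum:
  fixes x y :: "'i \<Rightarrow> real"
  assumes "finite S" "\<And>i. i \<in> S \<Longrightarrow> 0 \<le> x i \<and> x i \<le> y i"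
  shows "(\<Sum>i\<in>S. x i) * ln ((\<Sum>i\<in>S. x i) / (\<Sum>i\<in>S. y i)) \<le> (\<Sum>i\<in>S. x i * ln (x i / y i))"
proof -
  let ?X = "\<Sum>i\<in>S. x i" and ?Y = "\<Sum>i\<in>S. y i"
  have X0: "0 \<le> ?X" using assms by (intro sum_nonneg) auto
  have XY: "?X \<le> ?Y" using assms by (intro sum_mono) auto
  show ?thesis
  proof (cases "?X = 0")
    case True
    then have "\<forall>i\<in>S. x i = 0" using sum_nonneg_eq_0_iff[OF assms(1)] assms by auto
    then show ?thesis using True by simp
  next
    case False
    then have Xp: "0 < ?X" using X0 by simp
    then have Yp: "0 < ?Y" using XY by simp
    have "(\<Sum>i\<in>S. x i * ln (?X / ?Y) + x i - y i * ?X / ?Y) \<le> (\<Sum>i\<in>S. x i * ln (x i / y i))"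
      using assms Xp Yp by (intro sum_mono logsum_pt) auto
    moreover have "(\<Sum>i\<in>S. x i * ln (?X / ?Y) + x i - y i * ?X / ?Y) = ?X * ln (?X/?Y) + ?X - ?Y * ?X / ?Y"
      by (simp add: sum.distrib sum_subtractf sum_distrib_right sum_divide_distrib[symmetric])
    moreover have "?Y * ?X / ?Y = ?X" using Yp by simp
    ultimately show ?thesis by simp
  qed
qed

context prob_space begin

lemma part_sum:
  assumes A: "fin_partition M A" and c: "c \<in> sets M"
  shows "(\<Sum>a\<in>A. measure M (a \<inter> c)) = measure M c"
proof -
  have "measure M (\<Union>a\<in>A. a \<inter> c) = (\<Sum>a\<in>A. measure M (a \<inter> c))"
  proof (intro finite_measure_finite_Union)
    show "disjoint_family_on (\<lambda>a. a \<inter> c) A" using A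
      unfolding disjoint_family_on_def fin_partition_def by blast
  qed (use A c in \<open>auto simp: fin_partition_def\<close>)
  moreover have "(\<Union>a\<in>A. a \<inter> c) = c" using A sets.sets_into_space[OF c]
    unfolding fin_partition_def by auto
  ultimately show ?thesis by simp
qed

definition L :: "'a set set \<Rightarrow> real" where
  "L X = (\<Sum>x\<in>X. measure M x * ln (measure M x))"

lemma join_img: "join A C = (\<lambda>(a,c). a \<inter> c) ` (A \<times> C) - {{}}"
  unfolding join_def by auto

lemma cond_entropy_L:
  assumes A: "fin_partition M A" and C: "fin_partition M C"
  shows "cond_entropy M A C = L C - L (join A C)"
proof -
  have fA: "finite A" "A \<subseteq> sets M" and fC: "finite C" "C \<subseteq> sets M"
    using A C unfolding fin_partition_def by auto
  have t: "measure M (a \<inter> c) * ln (measure M (a \<inter> c) / measure M c) =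
      measure M (a \<inter> c) * ln (measure M (a \<inter> c)) - measure M (a \<inter> c) * ln (measure M c)"
    if "a \<in> A" "c \<in> C" for a c
  proof (cases "measure M (a \<inter> c) = 0")
    case False
    then have p: "0 < measure M (a \<inter> c)" using measure_nonneg[of M] by (simp add: less_le)
    moreover have "measure M (a \<inter> c) \<le> measure M c" using that fA fC
      by (intro finite_measure_mono) auto
    ultimately have "0 < measure M c" by simp
    then show ?thesis using p by (simp add: ln_div algebra_simps)
  qed simp
  have "(\<Sum>a\<in>A. \<Sum>c\<in>C. measure M (a \<inter> c) * ln (measure M (a \<inter> c) / measure M c)) =
     (\<Sum>a\<in>A. \<Sum>c\<in>C. measure M (a \<inter> c) * ln (measure M (a \<inter> c))) -
     (\<Sum>a\<in>A. \<Sum>c\<in>C. measure M (a \<inter> c) * ln (measure M c))"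
    using t by (simp add: sum_subtractf)
  also have "(\<Sum>a\<in>A. \<Sum>c\<in>C. measure M (a \<inter> c) * ln (measure M c)) = L C"
    unfolding L_def using part_sum[OF A] fC
    by (subst sum.swap) (auto simp: sum_distrib_right[symmetric] intro!: sum.cong)
  also have "(\<Sum>a\<in>A. \<Sum>c\<in>C. measure M (a \<inter> c) * ln (measure M (a \<inter> c))) = L (join A C)"
  proof -
    let ?g = "\<lambda>x. measure M x * ln (measure M x)"
    have "(\<Sum>a\<in>A. \<Sum>c\<in>C. ?g (a \<inter> c)) = (\<Sum>p\<in>A \<times> C. (?g \<circ> (\<lambda>(a,c). a \<inter> c)) p)"
      by (simp add: sum.cartesian_product case_prod_beta)
    also have "\<dots> = sum ?g ((\<lambda>(a,c). a \<inter> c) ` (A \<times> C))"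
    proof (rule sum.reindex_nontrivial[symmetric])
      show "finite (A \<times> C)" using fA fC by simp
      fix p q assume pq: "p \<in> A \<times> C" "q \<in> A \<times> C" "p \<noteq> q" "(\<lambda>(a,c). a \<inter> c) p = (\<lambda>(a,c). a \<inter> c) q"
      obtain a c a' c' where pq': "p = (a,c)" "q = (a',c')" by (cases p, cases q) auto
      have "a \<inter> c = {}"
      proof (rule ccontr)
        assume "a \<inter> c \<noteq> {}"
        then obtain x where x: "x \<in> a" "x \<in> c" by blast
        have eq: "a \<inter> c = a' \<inter> c'" using pq pq' by simp
        have "a = a'" using A pq pq' x eq unfolding fin_partition_def by blast
        moreover have "c = c'" using C pq pq' x eq unfolding fin_partition_def by blast
        ultimately show False using pq pq' by simp
      qed
      then have "(\<lambda>(a,c). a \<inter> c) p = {}" using pq' by simp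
      then show "?g ((\<lambda>(a,c). a \<inter> c) p) = 0" by simp
    qed
    also have "\<dots> = sum ?g ((\<lambda>(a,c). a \<inter> c) ` (A \<times> C) - {{}})"
      by (rule sum.mono_neutral_right) (use fA fC in auto)
    finally show ?thesis unfolding L_def join_img .
  qed
  finally show ?thesis unfolding cond_entropy_def by simp
qed

lemma cond_entropy_nonneg:
  assumes A: "fin_partition M A" and C: "fin_partition M C"
  shows "0 \<le> cond_entropy M A C"
proof -
  have "measure M (a \<inter> c) * ln (measure M (a \<inter> c) / measure M c) \<le> 0" if "a \<in> A" "c \<in> C" for a c
  proof -
    have le: "measure M (a \<inter> c) \<le> measure M c" using that A C unfolding fin_partition_def
      by (intro finite_measure_mono) auto
    have "ln (measure M (a \<inter> c) / measure M c) \<le> 0"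
    proof (cases "measure M (a \<inter> c) = 0")
      case False
      then have "0 < measure M (a \<inter> c)" using measure_nonneg[of M] by (simp add: less_le)
      then show ?thesis using le by (simp add: ln_div)
    qed simp
    then show ?thesis by (simp add: mult_nonneg_nonpos)
  qed
  then show ?thesis unfolding cond_entropy_def by (simp add: sum_nonpos)
qed

end

context prob_space begin

lemma group_measure:
  assumes B: "fin_partition M B" and B': "fin_partition M B'"
    and ref: "\<And>b'. b' \<in> B' \<Longrightarrow> g b' \<in> B \<and> b' \<subseteq> g b'"
    and b: "b \<in> B" and X: "X \<in> sets M"
  shows "measure M (X \<inter> b) = (\<Sum>b'\<in>{b'. b' \<in> B' \<and> g b' = b}. measure M (X \<inter> b'))"
proof -
  let ?G = "{b'. b' \<in> B' \<and> g b' = b}"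
  have fin: "finite ?G" using B' unfolding fin_partition_def by simp
  have "measure M (\<Union>b'\<in>?G. X \<inter> b') = (\<Sum>b'\<in>?G. measure M (X \<inter> b'))"
  proof (intro finite_measure_finite_Union[OF fin])
    show "(\<lambda>b'. X \<inter> b') ` ?G \<subseteq> sets M" using B' X unfolding fin_partition_def by auto
    show "disjoint_family_on (\<lambda>b'. X \<inter> b') ?G" using B'
      unfolding disjoint_family_on_def fin_partition_def by blast
  qed
  moreover have "(\<Union>b'\<in>?G. X \<inter> b') = X \<inter> b"
  proof
    show "(\<Union>b'\<in>?G. X \<inter> b') \<subseteq> X \<inter> b" using ref by blast
    show "X \<inter> b \<subseteq> (\<Union>b'\<in>?G. X \<inter> b')"
    proof
      fix x assume x: "x \<in> X \<inter> b"
      then have "x \<in> space M" using b B sets.sets_into_space unfolding fin_partition_def by blast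
      then obtain b' where b': "b' \<in> B'" "x \<in> b'" using B' unfolding fin_partition_def by blast
      then have "g b' \<in> B" "x \<in> g b'" using ref by auto
      then have "g b' = b" using x b B unfolding fin_partition_def by blast
      then show "x \<in> (\<Union>b'\<in>?G. X \<inter> b')" using b' x by blast
    qed
  qed
  ultimately show ?thesis by simp
qed

lemma cond_entropy_mono:
  assumes C: "fin_partition M C" and B: "fin_partition M B" and B': "fin_partition M B'"
    and ref: "\<And>b'. b' \<in> B' \<Longrightarrow> \<exists>b\<in>B. b' \<subseteq> b"
  shows "cond_entropy M C B' \<le> cond_entropy M C B"
proof -
  define g where "g b' = (SOME b. b \<in> B \<and> b' \<subseteq> b)" for b'
  have g: "g b' \<in> B \<and> b' \<subseteq> g b'" if "b' \<in> B'" for b'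
    using someI_ex[of "\<lambda>b. b \<in> B \<and> b' \<subseteq> b"] ref[OF that] unfolding g_def by blast
  have fB: "finite B" "B \<subseteq> sets M" and fB': "finite B'" "B' \<subseteq> sets M" and fC: "C \<subseteq> sets M"
    using B B' C unfolding fin_partition_def by auto
  let ?phi = "\<lambda>c b. measure M (c \<inter> b) * ln (measure M (c \<inter> b) / measure M b)"
  have inner: "(\<Sum>b\<in>B. ?phi c b) \<le> (\<Sum>b'\<in>B'. ?phi c b')" if c: "c \<in> C" for c
  proof -
    have "(\<Sum>b\<in>B. ?phi c b) \<le> (\<Sum>b\<in>B. \<Sum>b'\<in>{b'. b' \<in> B' \<and> g b' = b}. ?phi c b')"
    proof (rule sum_mono)
      fix b assume b: "b \<in> B"
      let ?G = "{b'. b' \<in> B' \<and> g b' = b}"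
      have e1: "measure M (c \<inter> b) = (\<Sum>b'\<in>?G. measure M (c \<inter> b'))"
        using group_measure[OF B B' g b] c fC by blast
      have e2: "measure M (space M \<inter> b) = (\<Sum>b'\<in>?G. measure M (space M \<inter> b'))"
        using group_measure[OF B B' g b] by blast
      have e3: "space M \<inter> b = b" if "b \<in> B" for b using that fB sets.sets_into_space by blast
      have e4: "space M \<inter> b' = b'" if "b' \<in> ?G" for b' using that fB' sets.sets_into_space by blast
      have e2': "measure M b = (\<Sum>b'\<in>?G. measure M b')" using e2 e3[OF b] e4 by simp
      show "?phi c b \<le> (\<Sum>b'\<in>?G. ?phi c b')"
        unfolding e1 e2'
      proof (rule logsum)
        show "finite ?G" using fB' by simp
        fix b' assume "b' \<in> ?G"
        then show "0 \<le> measure M (c \<inter> b') \<and> measure M (c \<inter> b') \<le> measure M b'"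
          using fB' by (auto intro!: finite_measure_mono)
      qed
    qed
    also have "\<dots> = (\<Sum>b'\<in>B'. ?phi c b')"
      by (rule sum.group) (use fB fB' g in auto)
    finally show ?thesis .
  qed
  show ?thesis unfolding cond_entropy_def using inner
    by (simp add: sum_mono)
qed

end


lemma funpow_meas: "f \<in> M \<rightarrow>\<^sub>M M \<Longrightarrow> f ^^ n \<in> M \<rightarrow>\<^sub>M M"
  by (induction n) (auto intro: measurable_comp)

locale pps =
  fixes M :: "'a measure" and T :: "'a \<Rightarrow> 'a" and P :: "'a set set"
  assumes pp: "pp_system M T" and fp: "fin_partition M P"
begin

sublocale prob_space M using pp unfolding pp_system_def by simp

lemma T_meas: "T \<in> M \<rightarrow>\<^sub>M M" and Ti_meas: "inv_into (space M) T \<in> M \<rightarrow>\<^sub>M M"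
  and T_bij: "bij_betw T (space M) (space M)"
  and T_pres: "\<And>A. A \<in> sets M \<Longrightarrow> measure M (T -` A \<inter> space M) = measure M A"
  using pp unfolding pp_system_def by auto

lemma Ti_T: "x \<in> space M \<Longrightarrow> inv_into (space M) T (T x) = x"
  using T_bij by (simp add: bij_betw_def inv_into_f_f)

lemma Tpow_meas: "Tpow M T n \<in> M \<rightarrow>\<^sub>M M"
  unfolding Tpow_def using funpow_meas[OF T_meas] funpow_meas[OF Ti_meas] by simp

lemma Tpow_space: "x \<in> space M \<Longrightarrow> Tpow M T n x \<in> space M"
  using measurable_space[OF Tpow_meas] by blast

lemma Tpow_succ:
  assumes x: "x \<in> space M"
  shows "Tpow M T (k + 1) x = Tpow M T k (T x)"
proof (cases "0 \<le> k")
  case True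
  then have "nat (k + 1) = Suc (nat k)" by simp
  then show ?thesis using True unfolding Tpow_def by (simp add: funpow_Suc_right del: funpow.simps)
next
  case False
  show ?thesis
  proof (cases "k = -1")
    case True then show ?thesis unfolding Tpow_def using Ti_T[OF x] by simp
  next
    case False2: False
    have "nat (- k) = Suc (nat (- (k + 1)))" using False False2 by simp
    then show ?thesis using False False2 Ti_T[OF x] unfolding Tpow_def
      by (simp add: funpow_Suc_right del: funpow.simps)
  qed
qed

definition cell :: "int set \<Rightarrow> (int \<Rightarrow> 'a set) \<Rightarrow> 'a set" where
  "cell F w = space M \<inter> (\<Inter>n\<in>F. Tpow M T n -` w n)"

lemma cell_alt: "cell F w = {x\<in>space M. \<forall>n\<in>F. Tpow M T n x \<in> w n}"
  unfolding cell_def by auto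

lemma refine_eq: "refine M T P F = {cell F w | w. \<forall>n\<in>F. w n \<in> P} - {{}}"
  unfolding refine_def cell_def by auto

lemma P_props: "finite P" "P \<subseteq> sets M" "\<Union>P = space M" "\<And>A B. A \<in> P \<Longrightarrow> B \<in> P \<Longrightarrow> A \<noteq> B \<Longrightarrow> A \<inter> B = {}"
  using fp unfolding fin_partition_def by auto

lemma cell_sets: "finite F \<Longrightarrow> (\<And>n. n \<in> F \<Longrightarrow> w n \<in> P) \<Longrightarrow> cell F w \<in> sets M"
  unfolding cell_alt
proof (intro sets.sets_Collect_finite_All)
  fix n assume "n \<in> F" "\<And>n. n \<in> F \<Longrightarrow> w n \<in> P"
  then have "w n \<in> sets M" using P_props by auto
  then have "Tpow M T n -` w n \<inter> space M \<in> sets M" by (rule measurable_sets[OF Tpow_meas])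
  moreover have "{x \<in> space M. Tpow M T n x \<in> w n} = Tpow M T n -` w n \<inter> space M" by auto
  ultimately show "{x \<in> space M. Tpow M T n x \<in> w n} \<in> sets M" by simp
qed

lemma P_unique: "p \<in> P \<Longrightarrow> q \<in> P \<Longrightarrow> y \<in> p \<Longrightarrow> y \<in> q \<Longrightarrow> p = q"
  using P_props(4) by blast

lemma refine_part:
  assumes F: "finite F"
  shows "fin_partition M (refine M T P F)"
  unfolding fin_partition_def
proof (intro conjI)
  have "refine M T P F \<subseteq> (\<lambda>w. cell F w) ` (PiE F (\<lambda>_. P))"
  proof
    fix C assume "C \<in> refine M T P F"
    then obtain w where w: "\<forall>n\<in>F. w n \<in> P" "C = cell F w" unfolding refine_eq by blast
    have "C = cell F (restrict w F)" unfolding w(2) cell_def by auto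
    moreover have "restrict w F \<in> PiE F (\<lambda>_. P)" using w by auto
    ultimately show "C \<in> (\<lambda>w. cell F w) ` (PiE F (\<lambda>_. P))" by blast
  qed
  moreover have "finite (PiE F (\<lambda>_. P))" using F P_props by (intro finite_PiE) auto
  ultimately show "finite (refine M T P F)" by (meson finite_subset finite_imageI)
  show "refine M T P F \<subseteq> sets M"
  proof
    fix C assume "C \<in> refine M T P F"
    then obtain w where w: "\<forall>n\<in>F. w n \<in> P" "C = cell F w" unfolding refine_eq by blast
    then show "C \<in> sets M" using cell_sets[OF F, of w] by simp
  qed
  show "\<Union> (refine M T P F) = space M"
  proof
    show "\<Union> (refine M T P F) \<subseteq> space M" unfolding refine_eq cell_def by blast
    show "space M \<subseteq> \<Union> (refine M T P F)"
    proof
      fix x assume x: "x \<in> space M"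
      define w where "w n = (SOME p. p \<in> P \<and> Tpow M T n x \<in> p)" for n
      have w: "w n \<in> P \<and> Tpow M T n x \<in> w n" for n
      proof -
        have "\<exists>p. p \<in> P \<and> Tpow M T n x \<in> p" using Tpow_space[OF x] P_props(3) by blast
        then show ?thesis unfolding w_def by (rule someI_ex)
      qed
      have "x \<in> cell F w" unfolding cell_alt using x w by auto
      then have "cell F w \<in> refine M T P F" unfolding refine_eq using w by blast
      then show "x \<in> \<Union> (refine M T P F)" using \<open>x \<in> cell F w\<close> by blast
    qed
  qed
  show "\<forall>A\<in>refine M T P F. \<forall>B\<in>refine M T P F. A \<noteq> B \<longrightarrow> A \<inter> B = {}"
  proof (intro ballI impI)
    fix A B assume A: "A \<in> refine M T P F" and B: "B \<in> refine M T P F" and ne: "A \<noteq> B"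
    obtain w where w: "\<forall>n\<in>F. w n \<in> P" "A = cell F w" using A unfolding refine_eq by blast
    obtain v where v: "\<forall>n\<in>F. v n \<in> P" "B = cell F v" using B unfolding refine_eq by blast
    show "A \<inter> B = {}"
    proof (rule ccontr)
      assume "A \<inter> B \<noteq> {}"
      then obtain x where x: "x \<in> cell F w" "x \<in> cell F v" using w v by blast
      have "\<forall>n\<in>F. w n = v n" using x w v P_unique unfolding cell_alt by blast
      then have "cell F w = cell F v" unfolding cell_def by auto
      then show False using ne w v by simp
    qed
  qed
qed

lemma cell_Un: "cell (F \<union> G) w = cell F w \<inter> cell G w"
  unfolding cell_def by auto

lemma mem_cell: "x \<in> cell F w \<longleftrightarrow> x \<in> space M \<and> (\<forall>n\<in>F. Tpow M T n x \<in> w n)"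
  unfolding cell_alt by simp

lemma mem_refine: "C \<in> refine M T P F \<longleftrightarrow> (\<exists>w. (\<forall>n\<in>F. w n \<in> P) \<and> C = cell F w) \<and> C \<noteq> {}"
  unfolding refine_eq by blast

lemma refine_join: "join (refine M T P F) (refine M T P G) = refine M T P (F \<union> G)"
proof (rule equalityI)
  show "join (refine M T P F) (refine M T P G) \<subseteq> refine M T P (F \<union> G)"
  proof (rule subsetI)
    fix C assume C: "C \<in> join (refine M T P F) (refine M T P G)"
    have "C \<in> {a \<inter> b | a b. a \<in> refine M T P F \<and> b \<in> refine M T P G}" and Cne: "C \<noteq> {}"
      using C unfolding join_def by simp_all
    then obtain a b where ab: "C = a \<inter> b" "a \<in> refine M T P F" "b \<in> refine M T P G"
      by blast
    obtain w where w: "\<forall>n\<in>F. w n \<in> P" "a = cell F w" using ab(2) unfolding mem_refine by blast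
    obtain v where v: "\<forall>n\<in>G. v n \<in> P" "b = cell G v" using ab(3) unfolding mem_refine by blast
    obtain x where x: "x \<in> C" using Cne by blast
    have xa: "\<forall>n\<in>F. Tpow M T n x \<in> w n" using x ab(1) w(2) mem_cell by blast
    have xb: "\<forall>n\<in>G. Tpow M T n x \<in> v n" using x ab(1) v(2) mem_cell by blast
    define u where "u n = (if n \<in> F then w n else v n)" for n
    have agree: "w n = v n" if "n \<in> F" "n \<in> G" for n
      using P_unique[of "w n" "v n" "Tpow M T n x"] xa xb w(1) v(1) that by blast
    have "C = cell (F \<union> G) u"
    proof (rule set_eqI)
      fix y
      have "y \<in> C \<longleftrightarrow> y \<in> space M \<and> (\<forall>n\<in>F. Tpow M T n y \<in> w n) \<and> (\<forall>n\<in>G. Tpow M T n y \<in> v n)"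
        unfolding ab(1) w(2) v(2) Int_iff mem_cell by blast
      also have "\<dots> \<longleftrightarrow> y \<in> space M \<and> (\<forall>n\<in>F \<union> G. Tpow M T n y \<in> u n)"
        unfolding u_def using agree by (auto split: if_splits)
      also have "\<dots> \<longleftrightarrow> y \<in> cell (F \<union> G) u" unfolding mem_cell ..
      finally show "y \<in> C \<longleftrightarrow> y \<in> cell (F \<union> G) u" .
    qed
    moreover have "\<forall>n\<in>F \<union> G. u n \<in> P" using w(1) v(1) unfolding u_def by auto
    ultimately show "C \<in> refine M T P (F \<union> G)" unfolding mem_refine using Cne by blast
  qed
  show "refine M T P (F \<union> G) \<subseteq> join (refine M T P F) (refine M T P G)"
  proof (rule subsetI)
    fix C assume "C \<in> refine M T P (F \<union> G)"
    then obtain w where w: "\<forall>n\<in>F \<union> G. w n \<in> P" "C = cell (F \<union> G) w" "C \<noteq> {}"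
      unfolding mem_refine by blast
    have CC: "C = cell F w \<inter> cell G w" using w(2) cell_Un by simp
    have "cell F w \<in> refine M T P F" unfolding mem_refine using w(1,3) CC by blast
    moreover have "cell G w \<in> refine M T P G" unfolding mem_refine using w(1,3) CC by blast
    ultimately show "C \<in> join (refine M T P F) (refine M T P G)"
      unfolding join_def using CC w(3) by blast
  qed
qed

lemma refine_sub: "b' \<in> refine M T P (G \<union> H) \<Longrightarrow> \<exists>b\<in>refine M T P G. b' \<subseteq> b"
proof -
  assume "b' \<in> refine M T P (G \<union> H)"
  then obtain w where w: "\<forall>n\<in>G \<union> H. w n \<in> P" "b' = cell (G \<union> H) w" "b' \<noteq> {}"
    unfolding refine_eq by blast
  then have "b' \<subseteq> cell G w" using cell_Un by blast
  moreover have "cell G w \<in> refine M T P G" unfolding refine_eq using w \<open>b' \<subseteq> cell G w\<close> by blast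
  ultimately show ?thesis by blast
qed

lemma refine_shift: "refine M T P ((\<lambda>n. n + 1) ` F) = (\<lambda>C. T -` C \<inter> space M) ` refine M T P F"
proof -
  have key: "cell ((\<lambda>n. n + 1) ` F) w = T -` cell F (\<lambda>k. w (k + 1)) \<inter> space M" for w
  proof (rule set_eqI)
    fix x
    show "x \<in> cell ((\<lambda>n. n + 1) ` F) w \<longleftrightarrow> x \<in> T -` cell F (\<lambda>k. w (k + 1)) \<inter> space M"
    proof (cases "x \<in> space M")
      case True
      then have "T x \<in> space M" using measurable_space[OF T_meas] by blast
      then show ?thesis using True Tpow_succ[OF True] by (simp add: mem_cell)
    qed (simp add: mem_cell)
  qed
  have ne: "T -` C \<inter> space M \<noteq> {}" if ne1: "C \<noteq> {}" "C \<subseteq> space M" for C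
  proof -
    obtain y where y: "y \<in> C" using ne1 by blast
    then have "y \<in> T ` space M" using T_bij ne1 unfolding bij_betw_def by blast
    then obtain x where "x \<in> space M" "T x = y" by blast
    then show ?thesis using y by blast
  qed
  show ?thesis
  proof (rule equalityI)
    show "refine M T P ((\<lambda>n. n + 1) ` F) \<subseteq> (\<lambda>C. T -` C \<inter> space M) ` refine M T P F"
    proof (rule subsetI)
      fix C assume "C \<in> refine M T P ((\<lambda>n. n + 1) ` F)"
      then obtain w where w: "\<forall>n\<in>(\<lambda>n. n + 1) ` F. w n \<in> P" "C = cell ((\<lambda>n. n + 1) ` F) w" "C \<noteq> {}"
        unfolding mem_refine by blast
      have C2: "C = T -` cell F (\<lambda>k. w (k + 1)) \<inter> space M" using w(2) key by simp
      have "cell F (\<lambda>k. w (k + 1)) \<noteq> {}" using w(3) C2 by blast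
      moreover have "\<forall>n\<in>F. w (n + 1) \<in> P" using w(1) by simp
      ultimately have "cell F (\<lambda>k. w (k + 1)) \<in> refine M T P F" unfolding mem_refine
        by (intro conjI exI[where x="\<lambda>k. w (k + 1)"]) auto
      then show "C \<in> (\<lambda>C. T -` C \<inter> space M) ` refine M T P F" using C2 by blast
    qed
    show "(\<lambda>C. T -` C \<inter> space M) ` refine M T P F \<subseteq> refine M T P ((\<lambda>n. n + 1) ` F)"
    proof (rule subsetI)
      fix C assume "C \<in> (\<lambda>C. T -` C \<inter> space M) ` refine M T P F"
      then obtain D where D: "D \<in> refine M T P F" "C = T -` D \<inter> space M" by blast
      then obtain v where v: "\<forall>n\<in>F. v n \<in> P" "D = cell F v" "D \<noteq> {}"
        unfolding mem_refine by blast
      define w where "w n = v (n - 1)" for n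
      have vw: "(\<lambda>k. w (k + 1)) = v" unfolding w_def by simp
      have "C = cell ((\<lambda>n. n + 1) ` F) w" using key[of w] D(2) v(2) unfolding vw by simp
      moreover have "D \<subseteq> space M" using v(2) unfolding cell_def by blast
      then have "C \<noteq> {}" using ne[of D] v(3) D(2) by blast
      moreover have "\<forall>n\<in>(\<lambda>n. n + 1) ` F. w n \<in> P" using v(1) unfolding w_def by simp
      ultimately show "C \<in> refine M T P ((\<lambda>n. n + 1) ` F)" unfolding mem_refine by blast
    qed
  qed
qed

lemma L_shift1:
  assumes F: "finite F"
  shows "L (refine M T P ((\<lambda>n. n + 1) ` F)) = L (refine M T P F)"
proof -
  have sub: "C \<subseteq> space M" if "C \<in> refine M T P F" for C using that unfolding refine_eq cell_def by blast
  have TT: "T ` (T -` X \<inter> space M) = X" if "X \<subseteq> space M" for X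
  proof
    show "T ` (T -` X \<inter> space M) \<subseteq> X" by blast
    show "X \<subseteq> T ` (T -` X \<inter> space M)"
    proof
      fix y assume y: "y \<in> X"
      have Tsp: "T ` space M = space M" using T_bij by (simp add: bij_betw_def)
      then have "y \<in> T ` space M" using y that by blast
      then obtain x where "x \<in> space M" "y = T x" by blast
      then show "y \<in> T ` (T -` X \<inter> space M)" using y by blast
    qed
  qed
  have inj: "inj_on (\<lambda>C. T -` C \<inter> space M) (refine M T P F)"
  proof (rule inj_onI)
    fix C D assume C: "C \<in> refine M T P F" and D: "D \<in> refine M T P F"
      and eq: "T -` C \<inter> space M = T -` D \<inter> space M"
    have "C = T ` (T -` C \<inter> space M)" using TT[OF sub[OF C]] by simp
    also have "\<dots> = T ` (T -` D \<inter> space M)" using eq by simp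
    also have "\<dots> = D" using TT[OF sub[OF D]] by simp
    finally show "C = D" .
  qed
  have meas: "C \<in> sets M" if "C \<in> refine M T P F" for C
  proof -
    have "refine M T P F \<subseteq> sets M" using refine_part[OF F] by (simp add: fin_partition_def)
    then show ?thesis using that by blast
  qed
  have "L ((\<lambda>C. T -` C \<inter> space M) ` refine M T P F) = L (refine M T P F)"
    unfolding L_def sum.reindex[OF inj] comp_def
    by (rule sum.cong) (simp_all add: T_pres meas)
  then show ?thesis unfolding refine_shift .
qed

end


lemma cesaro_o:
  fixes c :: "nat \<Rightarrow> real"
  assumes dec: "decseq c" and bdd: "bdd_below (range c)"
  defines "h \<equiv> Inf (range c)"
  shows "(\<lambda>m. \<Sum>j<m. c j - h) \<in> o(\<lambda>m. real m)"
proof (rule landau_o.smallI)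
  fix eps :: real assume eps: "0 < eps"
  have ch: "h \<le> c j" for j unfolding h_def using bdd by (intro cInf_lower) auto
  have "Inf (range c) < h + eps/2" using eps unfolding h_def by simp
  then obtain N where N: "c N < h + eps/2" using bdd by (subst (asm) cInf_less_iff) auto
  have cN: "c j - h \<le> eps/2" if "N \<le> j" for j using decseqD[OF dec that] N by simp
  define gN where "gN = (\<Sum>j<N. c j - h)"
  define K where "K = max N (nat \<lceil>2 * gN / eps\<rceil>)"
  have "eventually (\<lambda>m. K \<le> m) at_top" by (rule eventually_ge_at_top)
  then show "eventually (\<lambda>m. norm (\<Sum>j<m. c j - h) \<le> eps * norm (real m)) at_top"
  proof (rule eventually_mono)
    fix m assume m: "K \<le> m"
    then have Nm: "N \<le> m" unfolding K_def by simp
    have "real (nat \<lceil>2 * gN / eps\<rceil>) \<le> real m" using m unfolding K_def by simp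
    then have "2 * gN / eps \<le> real m" by linarith
    then have gNb: "gN \<le> real m * eps / 2" using eps by (simp add: field_simps)
    have split: "(\<Sum>j<m. c j - h) = gN + (\<Sum>j\<in>{N..<m}. c j - h)"
      unfolding gN_def lessThan_atLeast0 using sum.atLeastLessThan_concat[of 0 N m "\<lambda>j. c j - h"] Nm by simp
    have "(\<Sum>j\<in>{N..<m}. c j - h) \<le> (\<Sum>j\<in>{N..<m}. eps/2)" using cN by (intro sum_mono) auto
    also have "\<dots> = real (m - N) * (eps/2)" by simp
    also have "\<dots> \<le> real m * (eps/2)" using eps by (intro mult_right_mono) auto
    finally have "(\<Sum>j<m. c j - h) \<le> real m * eps" using split gNb by simp
    moreover have "0 \<le> (\<Sum>j<m. c j - h)" using ch by (intro sum_nonneg) (auto simp: algebra_simps)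
    ultimately show "norm (\<Sum>j<m. c j - h) \<le> eps * norm (real m)" by (simp add: mult.commute)
  qed
qed

context pps begin

definition E :: "int set \<Rightarrow> real" where "E F = - L (refine M T P F)"

lemma H_refine: "finite F \<Longrightarrow> finite G \<Longrightarrow>
    cond_entropy M (refine M T P F) (refine M T P G) = E (F \<union> G) - E G"
  unfolding E_def by (simp add: cond_entropy_L refine_part refine_join)

lemma shift_comp: "(\<lambda>n. n + 1) ` ((\<lambda>n. n + t) ` F) = (\<lambda>n. n + (t + 1)) ` (F :: int set)"
  unfolding image_image by (intro image_cong) auto

lemma E_shift_nat: "finite F \<Longrightarrow> E ((\<lambda>n. n + int k) ` F) = E F \<and> E ((\<lambda>n. n + - int k) ` F) = E F"
proof (induction k)
  case 0 then show ?case by simp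
next
  case (Suc k)
  have fin: "finite ((\<lambda>n. n + t) ` F)" for t using Suc.prems by simp
  have a: "E ((\<lambda>n. n + int (Suc k)) ` F) = E ((\<lambda>n. n + int k) ` F)"
    using L_shift1[OF fin[of "int k"]] unfolding E_def shift_comp by (simp add: add.commute)
  have b: "E ((\<lambda>n. n + - int k) ` F) = E ((\<lambda>n. n + - int (Suc k)) ` F)"
    using L_shift1[OF fin[of "- int (Suc k)"]] unfolding E_def shift_comp by simp
  show ?case using a b Suc by simp
qed

lemma E_shift: "finite F \<Longrightarrow> E ((\<lambda>n. n + t) ` F) = E F"
proof (cases "0 \<le> t")
  case True
  then have "t = int (nat t)" by simp
  then show "finite F \<Longrightarrow> E ((\<lambda>n. n + t) ` F) = E F" using E_shift_nat[of F "nat t"] by metis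
next
  case False
  then have "t = - int (nat (-t))" by simp
  then show "finite F \<Longrightarrow> E ((\<lambda>n. n + t) ` F) = E F" using E_shift_nat[of F "nat (-t)"] by metis
qed

definition e :: "nat \<Rightarrow> real" where "e n = E {0..int n - 1}"

lemma E_ivl: "E {a..b} = e (card {a..b})"
proof -
  have img: "(\<lambda>n. n + a) ` {0..b-a} = {a..b}"
  proof
    show "(\<lambda>n. n + a) ` {0..b-a} \<subseteq> {a..b}" by auto
    show "{a..b} \<subseteq> (\<lambda>n. n + a) ` {0..b-a}"
    proof
      fix x assume "x \<in> {a..b}"
      then show "x \<in> (\<lambda>n. n + a) ` {0..b-a}" by (intro image_eqI[where x="x - a"]) auto
    qed
  qed
  have "{0..int (card {a..b}) - 1} = {0..b-a}" by auto
  then show ?thesis unfolding e_def using E_shift[of "{0..b-a}" a] img by simp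
qed

lemma E_dint: "dinterval X \<Longrightarrow> E X = e (card X)"
  unfolding dinterval_def using E_ivl by blast

definition c :: "nat \<Rightarrow> real" where "c n = e (Suc n) - e n"

lemma c_H: "c n = cond_entropy M (refine M T P {0}) (refine M T P {1..int n})"
proof -
  have "{0} \<union> {1..int n} = {0..int n}" by auto
  moreover have "nat (int n + 1) = Suc n" by simp
  ultimately have "E ({0} \<union> {1..int n}) = e (Suc n)" using E_ivl[of 0 "int n"] by simp
  moreover have "E {1..int n} = e n" using E_ivl[of 1 "int n"] by simp
  ultimately show ?thesis unfolding c_def by (simp add: H_refine)
qed

lemma c_nonneg: "0 \<le> c n"
  unfolding c_H by (intro cond_entropy_nonneg refine_part) auto

lemma c_dec: "c (Suc n) \<le> c n"
proof -
  have eq: "{1..int (Suc n)} = {1..int n} \<union> {int n + 1}" by auto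
  show ?thesis unfolding c_H
  proof (rule cond_entropy_mono)
    show "fin_partition M (refine M T P {0})" "fin_partition M (refine M T P {1..int n})"
      "fin_partition M (refine M T P {1..int (Suc n)})" by (auto intro: refine_part)
    fix b' assume "b' \<in> refine M T P {1..int (Suc n)}"
    then show "\<exists>b\<in>refine M T P {1..int n}. b' \<subseteq> b" unfolding eq by (rule refine_sub)
  qed
qed

lemma tele: "e (k + m) - e k = (\<Sum>j<m. c (k + j))"
  by (induction m) (simp_all add: c_def)

lemma MI_eq:
  assumes I: "dinterval I" and J: "dinterval J" and IJ: "dinterval (I \<union> J)"
  shows "cond_mutual_info M (refine M T P J) (refine M T P I) (refine M T P (I \<inter> J))
    = (e (card (I \<inter> J) + card (J - I)) - e (card (I \<inter> J))) - (e (card I + card (J - I)) - e (card I))"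
proof -
  have fI: "finite I" and fJ: "finite J" using I J unfolding dinterval_def by auto
  have K: "dinterval (I \<inter> J)"
  proof -
    obtain a b where ab: "I = {a..b}" using I unfolding dinterval_def by blast
    obtain c d where cd: "J = {c..d}" using J unfolding dinterval_def by blast
    have "I \<inter> J = {max a c..min b d}" unfolding ab cd by auto
    then show ?thesis unfolding dinterval_def by blast
  qed
  have fK: "finite (I \<inter> J)" using fI by simp
  have j1: "join (refine M T P I) (refine M T P (I \<inter> J)) = refine M T P I"
    using refine_join[of I "I \<inter> J"] by (simp add: Un_absorb2)
  have "cond_mutual_info M (refine M T P J) (refine M T P I) (refine M T P (I \<inter> J))
     = (E (J \<union> (I \<inter> J)) - E (I \<inter> J)) - (E (J \<union> I) - E I)"
    unfolding cond_mutual_info_def j1 using fI fJ fK by (simp add: H_refine)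
  also have "J \<union> (I \<inter> J) = J" by auto
  also have "J \<union> I = I \<union> J" by auto
  finally have mi: "cond_mutual_info M (refine M T P J) (refine M T P I) (refine M T P (I \<inter> J))
     = (e (card J) - e (card (I \<inter> J))) - (e (card (I \<union> J)) - e (card I))"
    using E_dint I J K IJ by simp
  have c1: "card (J - I) = card J - card (I \<inter> J)"
    using card_Diff_subset_Int[of J I] fJ by (simp add: Int_commute)
  have c2: "card (I \<inter> J) \<le> card J" using fJ by (intro card_mono) auto
  have c3: "card I + card J = card (I \<union> J) + card (I \<inter> J)" using card_Un_Int[OF fI fJ] .
  have "card J = card (I \<inter> J) + card (J - I)" using c1 c2 by simp
  moreover have "card (I \<union> J) = card I + card (J - I)" using c1 c2 c3 by simp
  ultimately show ?thesis using mi by simp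
qed

lemma main_bound:
  "\<exists>g :: nat \<Rightarrow> real. (\<forall>m. 0 \<le> g m) \<and> g \<in> o(\<lambda>m. real m) \<and>
    (\<forall>I J. dinterval I \<and> dinterval J \<and> dinterval (I \<union> J) \<longrightarrow>
       cond_mutual_info M (refine M T P J) (refine M T P I) (refine M T P (I \<inter> J))
         \<le> g (card (J - I)))"
proof -
  have dec: "decseq c" by (rule decseq_SucI) (rule c_dec)
  have bdd: "bdd_below (range c)" using c_nonneg by (intro bdd_belowI[of _ 0]) auto
  define h where "h = Inf (range c)"
  have ch: "h \<le> c j" for j unfolding h_def using bdd by (intro cInf_lower) auto
  define g where "g m = (\<Sum>j<m. c j - h)" for m
  have "g \<in> o(\<lambda>m. real m)" unfolding g_def h_def using cesaro_o[OF dec bdd] .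
  moreover have "\<forall>m. 0 \<le> g m" unfolding g_def using ch by (auto intro!: sum_nonneg simp: algebra_simps)
  moreover have "cond_mutual_info M (refine M T P J) (refine M T P I) (refine M T P (I \<inter> J))
         \<le> g (card (J - I))" if asm: "dinterval I" "dinterval J" "dinterval (I \<union> J)" for I J
  proof -
    let ?r = "card (I \<inter> J)" and ?p = "card I" and ?m = "card (J - I)"
    have fI: "finite I" using asm unfolding dinterval_def by auto
    have rp: "?r \<le> ?p" using fI by (intro card_mono) auto
    have "(e (?r + ?m) - e ?r) - (e (?p + ?m) - e ?p) = (\<Sum>j<?m. c (?r + j) - c (?p + j))"
      unfolding tele by (simp add: sum_subtractf)
    also have "\<dots> \<le> (\<Sum>j<?m. c j - h)"
    proof (rule sum_mono)
      fix j
      have "c (?r + j) \<le> c j" using decseqD[OF dec] by simp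
      moreover have "h \<le> c (?p + j)" by (rule ch)
      ultimately show "c (?r + j) - c (?p + j) \<le> c j - h" by simp
    qed
    finally show ?thesis using MI_eq[OF asm] unfolding g_def by simp
  qed
  ultimately show ?thesis by blast
qed

end


theorem mainTheorem14:
  assumes "pp_system M T" and "fin_partition M P"
  shows "\<exists>g :: nat \<Rightarrow> real. (\<forall>m. 0 \<le> g m) \<and> g \<in> o(\<lambda>m. real m) \<and>
    (\<forall>I J. dinterval I \<and> dinterval J \<and> dinterval (I \<union> J) \<longrightarrow>
       cond_mutual_info M (refine M T P J) (refine M T P I) (refine M T P (I \<inter> J))
         \<le> g (card (J - I)))"
proof -
  interpret pps M T P using assms by unfold_locales
  show ?thesis by (rule main_bound)
qed

end
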